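(* Assume (A1) and (A2). Then for every $\nu$ with $0<\nu<\min(\bar\nu,\tilde\nu)$, $$d:=\inf_{z\in\mathbb{C}_\nu}\sum_{j=1}^{n+1}|r_j(z)|>0.$$
   Context: Setting: $n\in\mathbb{N}_{>0}$; $(A_k)_{k\ge1}$ real $n\times n$ matrices, $(B_j)_{j\ge0}$ real $n\times 1$ matrices with $\sum|A_k|+\sum|B_j|<\infty$; strictly increasing delays $\tau_k\in(0,\tau_*]$, $\theta_j\in[0,\theta_*]$ with $\tau_*,\theta_*>0$; $N\in L^2((0,\tau_* ),\mathbb{R}^{n\times n})$, $M\in L^2((0,\theta_* ),\mathbb{R}^n)$. For $\nu\ge0$, $\mathbb{C}_\nu:=\{z\in\mathbb{C}:\operatorname{Re}z>-\nu\}$. Define $\Delta_0(z):=I_n-\sum_kA_ke^{-\tau_kz}$, $q(z):=\Delta_0(z)-\int_0^{\tau_*}N(\eta)e^{-\eta z}d\eta$, $p(z):=\sum_jB_je^{-\theta_jz}+\int_0^{\theta_*}M(\eta)e^{-\eta z}d\eta$. For $j\in\{1,\dots,n+1\}$, $r_j(z)$ is the determinant of the $n\times n$ matrix obtained from $[q(z),\,-p(z)]$ by deleting column $j$. Assumption (A1): there exist $\tilde\nu>0$, $\eta>0$ with $|\det\Delta_0(z)|>\eta$ for all $z\in\mathbb{C}_{\tilde\nu}$. Assumption (A2): there exists $\bar\nu>0$ with $\operatorname{rank}[q(z),-p(z)]=n$ for all $z\in\mathbb{C}_{\bar\nu}$. *)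

theory Defs
  imports "HOL-Analysis.Analysis" "Jordan_Normal_Form.DL_Rank" "Jordan_Normal_Form.DL_Submatrix"
begin

text \<open>Matrices are Jordan_Normal_Form matrices (type 'a mat) with explicit dimensions.
  Row/column indices are 0-based.\<close>

text \<open>Absolute norm of a matrix: sum of the absolute values of all entries
  (all norms on finite-dimensional spaces are equivalent).\<close>
definition mat_abs_norm :: "real mat \<Rightarrow> real" where
  "mat_abs_norm X = (\<Sum>i<dim_row X. \<Sum>l<dim_col X. \<bar>X $$ (i,l)\<bar>)"

definition L2_on :: "real set \<Rightarrow> (real \<Rightarrow> real) \<Rightarrow> bool" where
  "L2_on S f \<longleftrightarrow> set_borel_measurable lborel S f \<and> set_integrable lborel S (\<lambda>x. (f x)^2)"

definition Delta0 :: "nat \<Rightarrow> (nat \<Rightarrow> real mat) \<Rightarrow> (nat \<Rightarrow> real) \<Rightarrow> complex \<Rightarrow> complex mat" where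
  "Delta0 n A \<tau> z = Matrix.mat n n (\<lambda>(i,l).
      (if i = l then 1 else 0) - (\<Sum>k. complex_of_real (A k $$ (i,l)) * exp (- complex_of_real (\<tau> k) * z)))"

definition qfun :: "nat \<Rightarrow> (nat \<Rightarrow> real mat) \<Rightarrow> (nat \<Rightarrow> real) \<Rightarrow> real \<Rightarrow> (real \<Rightarrow> real mat)
    \<Rightarrow> complex \<Rightarrow> complex mat" where
  "qfun n A \<tau> \<tau>s N z = Matrix.mat n n (\<lambda>(i,l).
      Delta0 n A \<tau> z $$ (i,l)
      - (LINT \<eta>:{0<..<\<tau>s}|lborel. complex_of_real (N \<eta> $$ (i,l)) * exp (- complex_of_real \<eta> * z)))"

definition pfun :: "nat \<Rightarrow> (nat \<Rightarrow> real mat) \<Rightarrow> (nat \<Rightarrow> real) \<Rightarrow> real \<Rightarrow> (real \<Rightarrow> real vec)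
    \<Rightarrow> complex \<Rightarrow> complex mat" where
  "pfun n B \<theta> \<theta>s M z = Matrix.mat n 1 (\<lambda>(i,_).
      (\<Sum>j. complex_of_real (B j $$ (i,0)) * exp (- complex_of_real (\<theta> j) * z))
      + (LINT \<eta>:{0<..<\<theta>s}|lborel. complex_of_real (vec_index (M \<eta>) i) * exp (- complex_of_real \<eta> * z)))"

definition aug_mat :: "nat \<Rightarrow> complex mat \<Rightarrow> complex mat \<Rightarrow> complex mat" where
  "aug_mat n Q P = Matrix.mat n (n+1) (\<lambda>(i,k). if k < n then Q $$ (i,k) else - (P $$ (i,0)))"

text \<open>r_j(z), j in {1..n+1}: determinant of [q(z), -p(z)] with column j (1-based) deleted.\<close>
definition rfun :: "nat \<Rightarrow> (nat \<Rightarrow> real mat) \<Rightarrow> (nat \<Rightarrow> real) \<Rightarrow> real \<Rightarrow> (real \<Rightarrow> real mat)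
    \<Rightarrow> (nat \<Rightarrow> real mat) \<Rightarrow> (nat \<Rightarrow> real) \<Rightarrow> real \<Rightarrow> (real \<Rightarrow> real vec) \<Rightarrow> nat \<Rightarrow> complex \<Rightarrow> complex" where
  "rfun n A \<tau> \<tau>s N B \<theta> \<theta>s M j z =
     Determinant.det (submatrix (aug_mat n (qfun n A \<tau> \<tau>s N z) (pfun n B \<theta> \<theta>s M z))
                        {..<n} ({..<n+1} - {j - 1}))"

end

theory Submission
  imports Defs "Jordan_Normal_Form.DL_Rank_Submatrix"
begin


definition LTr :: "real \<Rightarrow> (real \<Rightarrow> real) \<Rightarrow> complex \<Rightarrow> complex" where
  "LTr T h z = (LINT \<eta>:{0<..<T}|lborel. complex_of_real (h \<eta>) * exp (- complex_of_real \<eta> * z))"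

lemma exp_bound_H:
  assumes "0 \<le> \<nu>" "-\<nu> \<le> Re z" "0 \<le> x" "x \<le> T"
  shows "cmod (exp (- complex_of_real x * z)) \<le> exp (\<nu> * T)"
proof -
  have "cmod (exp (- complex_of_real x * z)) = exp (- x * Re z)" by (simp add: norm_exp_eq_Re)
  also have "\<dots> \<le> exp (\<nu> * T)"
  proof -
    have "- x * Re z \<le> x * \<nu>" using assms mult_left_mono[of "-Re z" \<nu> x] by simp
    also have "\<dots> \<le> T * \<nu>" using assms by (simp add: mult_right_mono)
    finally show ?thesis by (simp add: mult.commute)
  qed
  finally show ?thesis .
qed

lemma LT_integrable:
  assumes h: "set_integrable lborel {0<..<T} h" and nu: "0 \<le> \<nu>" "-\<nu> \<le> Re z"
  shows "set_integrable lborel {0<..<T} (\<lambda>\<eta>. complex_of_real (h \<eta>) * exp (- complex_of_real \<eta> * z))"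
proof -
  have m: "(\<lambda>x. indicator {0<..<T} x *\<^sub>R h x) \<in> borel_measurable lborel"
    using h unfolding set_integrable_def by auto
  have i2: "set_integrable lborel {0<..<T} (\<lambda>x. exp (\<nu> * T) * h x)"
    using h by (rule set_integrable_mult_right)
  show ?thesis unfolding set_integrable_def
  proof (rule Bochner_Integration.integrable_bound[OF i2[unfolded set_integrable_def]])
    have "(\<lambda>x. indicator {0<..<T} x *\<^sub>R (complex_of_real (h x) * exp (- complex_of_real x * z)))
      = (\<lambda>x. complex_of_real (indicator {0<..<T} x *\<^sub>R h x) * exp (- complex_of_real x * z))"
      by (auto simp: indicator_def fun_eq_iff)
    moreover have "(\<lambda>x. complex_of_real (indicator {0<..<T} x *\<^sub>R h x) * exp (- complex_of_real x * z)) \<in> borel_measurable lborel"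
      using m by measurable
    ultimately show "(\<lambda>x. indicator {0<..<T} x *\<^sub>R (complex_of_real (h x) * exp (- complex_of_real x * z))) \<in> borel_measurable lborel"
      by simp
    show "AE x in lborel. norm (indicator {0<..<T} x *\<^sub>R (complex_of_real (h x) * exp (- complex_of_real x * z)))
          \<le> norm (indicator {0<..<T} x *\<^sub>R (exp (\<nu> * T) * h x))"
    proof (rule AE_I2)
      fix x show "norm (indicator {0<..<T} x *\<^sub>R (complex_of_real (h x) * exp (- complex_of_real x * z)))
          \<le> norm (indicator {0<..<T} x *\<^sub>R (exp (\<nu> * T) * h x))"
      proof (cases "x \<in> {0<..<T}")
        case True
        have "cmod (exp (- complex_of_real x * z)) \<le> exp (\<nu> * T)"
          using True nu by (intro exp_bound_H) auto
        then have "\<bar>h x\<bar> * cmod (exp (- complex_of_real x * z)) \<le> \<bar>h x\<bar> * exp (\<nu> * T)"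
          by (simp add: mult_left_mono)
        then show ?thesis using True by (simp add: norm_mult mult.commute)
      qed simp
    qed
  qed
qed

lemma LT_norm_le:
  assumes h: "set_integrable lborel {0<..<T} h" and nu: "0 \<le> \<nu>" "-\<nu> \<le> Re z"
  shows "cmod (LTr T h z) \<le> exp (\<nu> * T) * (LINT x:{0<..<T}|lborel. \<bar>h x\<bar>)"
proof -
  have "cmod (LTr T h z) \<le> (LINT x:{0<..<T}|lborel. cmod (complex_of_real (h x) * exp (- complex_of_real x * z)))"
    unfolding LTr_def by (rule set_integral_norm_bound[OF LT_integrable[OF assms]])
  also have "\<dots> \<le> (LINT x:{0<..<T}|lborel. exp (\<nu> * T) * \<bar>h x\<bar>)"
  proof (rule set_integral_mono)
    show "set_integrable lborel {0<..<T} (\<lambda>x. cmod (complex_of_real (h x) * exp (- complex_of_real x * z)))"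
      using LT_integrable[OF assms] by (rule set_integrable_norm)
    show "set_integrable lborel {0<..<T} (\<lambda>x. exp (\<nu> * T) * \<bar>h x\<bar>)"
      using h by (intro set_integrable_mult_right set_integrable_abs)
    fix x assume x: "x \<in> {0<..<T}"
    have "cmod (exp (- complex_of_real x * z)) \<le> exp (\<nu> * T)"
      using x nu by (intro exp_bound_H) auto
    then show "cmod (complex_of_real (h x) * exp (- complex_of_real x * z)) \<le> exp (\<nu> * T) * \<bar>h x\<bar>"
      by (simp add: norm_mult mult.commute mult_left_mono)
  qed
  also have "\<dots> = exp (\<nu> * T) * (LINT x:{0<..<T}|lborel. \<bar>h x\<bar>)"
    by (rule set_integral_mult_right)
  finally show ?thesis .
qed

lemma LT_diff:
  assumes "set_integrable lborel {0<..<T} h" "set_integrable lborel {0<..<T} g" "0 \<le> \<nu>" "-\<nu> \<le> Re z"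
  shows "LTr T (\<lambda>x. h x - g x) z = LTr T h z - LTr T g z"
  unfolding LTr_def using LT_integrable[OF assms(1,3,4)] LT_integrable[OF assms(2,3,4)]
  by (subst set_integral_diff(2)[symmetric]) (auto simp: algebra_simps)

lemma LT_add:
  assumes "set_integrable lborel {0<..<T} h" "set_integrable lborel {0<..<T} g" "0 \<le> \<nu>" "-\<nu> \<le> Re z"
  shows "LTr T (\<lambda>x. h x + g x) z = LTr T h z + LTr T g z"
  unfolding LTr_def using LT_integrable[OF assms(1,3,4)] LT_integrable[OF assms(2,3,4)]
  by (subst set_integral_add(2)[symmetric]) (auto simp: algebra_simps)

lemma LT_scale:
  shows "LTr T (\<lambda>x. c * h x) z = c * LTr T h z"
  unfolding LTr_def by (subst set_integral_mult_right[symmetric]) (simp add: algebra_simps)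


lemma LTr_zero[simp]: "LTr T (\<lambda>_. 0) z = 0"
  unfolding LTr_def by simp

lemma LTr_cong: "(\<And>x. x \<in> {0<..<T} \<Longrightarrow> h x = g x) \<Longrightarrow> LTr T h z = LTr T g z"
  unfolding LTr_def by (intro set_lebesgue_integral_cong) auto

definition RL :: "real \<Rightarrow> real \<Rightarrow> (real \<Rightarrow> real) \<Rightarrow> bool" where
  "RL \<nu> T h \<longleftrightarrow> (\<forall>e>0. \<exists>R. \<forall>z. -\<nu> \<le> Re z \<longrightarrow> R \<le> cmod z \<longrightarrow> cmod (LTr T h z) \<le> e)"

lemma RL_cong: "(\<And>x. x \<in> {0<..<T} \<Longrightarrow> h x = g x) \<Longrightarrow> RL \<nu> T h \<Longrightarrow> RL \<nu> T g"
  unfolding RL_def using LTr_cong[of T h g] by metis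

lemma RL_zero: "RL \<nu> T (\<lambda>_. 0)"
  unfolding RL_def by auto

lemma RL_add:
  assumes "set_integrable lborel {0<..<T} h" "set_integrable lborel {0<..<T} g" "0 \<le> \<nu>"
    and "RL \<nu> T h" "RL \<nu> T g"
  shows "RL \<nu> T (\<lambda>x. h x + g x)"
  unfolding RL_def
proof (intro allI impI)
  fix e :: real assume e: "e > 0"
  obtain R1 where R1: "\<And>z. -\<nu> \<le> Re z \<Longrightarrow> R1 \<le> cmod z \<Longrightarrow> cmod (LTr T h z) \<le> e/2"
    using assms(4) e unfolding RL_def by (meson half_gt_zero)
  obtain R2 where R2: "\<And>z. -\<nu> \<le> Re z \<Longrightarrow> R2 \<le> cmod z \<Longrightarrow> cmod (LTr T g z) \<le> e/2"
    using assms(5) e unfolding RL_def by (meson half_gt_zero)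
  show "\<exists>R. \<forall>z. - \<nu> \<le> Re z \<longrightarrow> R \<le> cmod z \<longrightarrow> cmod (LTr T (\<lambda>x. h x + g x) z) \<le> e"
  proof (intro exI allI impI)
    fix z assume z: "-\<nu> \<le> Re z" "max R1 R2 \<le> cmod z"
    have "LTr T (\<lambda>x. h x + g x) z = LTr T h z + LTr T g z"
      using assms(1-3) z by (intro LT_add)
    also have "cmod \<dots> \<le> cmod (LTr T h z) + cmod (LTr T g z)" by (rule norm_triangle_ineq)
    also have "\<dots> \<le> e/2 + e/2" using R1 R2 z by (intro add_mono) auto
    finally show "cmod (LTr T (\<lambda>x. h x + g x) z) \<le> e" by simp
  qed
qed

lemma RL_scale:
  assumes "RL \<nu> T h"
  shows "RL \<nu> T (\<lambda>x. c * h x)"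
  unfolding RL_def
proof (intro allI impI)
  fix e :: real assume e: "e > 0"
  have e': "e / (\<bar>c\<bar> + 1) > 0" using e by simp
  obtain R where R: "\<And>z. -\<nu> \<le> Re z \<Longrightarrow> R \<le> cmod z \<Longrightarrow> cmod (LTr T h z) \<le> e / (\<bar>c\<bar> + 1)"
    using assms e' unfolding RL_def by meson
  show "\<exists>R. \<forall>z. - \<nu> \<le> Re z \<longrightarrow> R \<le> cmod z \<longrightarrow> cmod (LTr T (\<lambda>x. c * h x) z) \<le> e"
  proof (intro exI allI impI)
    fix z assume z: "-\<nu> \<le> Re z" "R \<le> cmod z"
    have "cmod (LTr T (\<lambda>x. c * h x) z) = \<bar>c\<bar> * cmod (LTr T h z)"
      by (simp add: LT_scale norm_mult)
    also have "\<dots> \<le> (\<bar>c\<bar> + 1) * (e / (\<bar>c\<bar> + 1))"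
      using R[OF z] by (intro mult_mono) auto
    also have "\<dots> = e" by simp
    finally show "cmod (LTr T (\<lambda>x. c * h x) z) \<le> e" .
  qed
qed

lemma RL_approx:
  assumes h: "set_integrable lborel {0<..<T} h" and nu: "0 \<le> \<nu>"
    and approx: "\<And>d. d > 0 \<Longrightarrow> \<exists>g. set_integrable lborel {0<..<T} g \<and> RL \<nu> T g \<and>
                     (LINT x:{0<..<T}|lborel. \<bar>h x - g x\<bar>) < d"
  shows "RL \<nu> T h"
  unfolding RL_def
proof (intro allI impI)
  fix e :: real assume e: "e > 0"
  define d where "d = e / (2 * exp (\<nu> * T))"
  have d: "d > 0" using e by (simp add: d_def)
  obtain g where g: "set_integrable lborel {0<..<T} g" "RL \<nu> T g"
    "(LINT x:{0<..<T}|lborel. \<bar>h x - g x\<bar>) < d"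
    using approx[OF d] by blast
  obtain R where R: "\<And>z. -\<nu> \<le> Re z \<Longrightarrow> R \<le> cmod z \<Longrightarrow> cmod (LTr T g z) \<le> e/2"
    using g(2) e unfolding RL_def by (meson half_gt_zero)
  show "\<exists>R. \<forall>z. - \<nu> \<le> Re z \<longrightarrow> R \<le> cmod z \<longrightarrow> cmod (LTr T h z) \<le> e"
  proof (intro exI allI impI)
    fix z assume z: "-\<nu> \<le> Re z" "R \<le> cmod z"
    have hg: "set_integrable lborel {0<..<T} (\<lambda>x. h x - g x)"
      using h g(1) by (rule set_integral_diff)
    have "LTr T h z = LTr T (\<lambda>x. h x - g x) z + LTr T g z"
      using LT_diff[OF h g(1) nu z(1)] by simp
    also have "cmod \<dots> \<le> cmod (LTr T (\<lambda>x. h x - g x) z) + cmod (LTr T g z)" by (rule norm_triangle_ineq)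
    also have "\<dots> \<le> exp (\<nu> * T) * d + e/2"
    proof (rule add_mono)
      have "cmod (LTr T (\<lambda>x. h x - g x) z) \<le> exp (\<nu> * T) * (LINT x:{0<..<T}|lborel. \<bar>h x - g x\<bar>)"
        by (rule LT_norm_le[OF hg nu z(1)])
      also have "\<dots> \<le> exp (\<nu> * T) * d" using g(3) by (intro mult_left_mono) auto
      finally show "cmod (LTr T (\<lambda>x. h x - g x) z) \<le> exp (\<nu> * T) * d" .
      show "cmod (LTr T g z) \<le> e/2" using R z by auto
    qed
    also have "exp (\<nu> * T) * d = e/2" by (simp add: d_def)
    finally show "cmod (LTr T h z) \<le> e" by simp
  qed
qed


lemma LTr_interval:
  assumes b: "0 < b" "b \<le> T" and z: "z \<noteq> 0"
  shows "LTr T (indicator {..b}) z = (1 - exp (- complex_of_real b * z)) / z"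
proof -
  have "LTr T (indicator {..b}) z =
        integral\<^sup>L lborel (\<lambda>x. indicator {0<..<T} x *\<^sub>R (complex_of_real (indicator {..b} x) * exp (- complex_of_real x * z)))"
    unfolding LTr_def set_lebesgue_integral_def by simp
  also have "\<dots> = integral\<^sup>L lborel (\<lambda>x. indicator {0<..b} x *\<^sub>R exp (- complex_of_real x * z))"
  proof (rule integral_cong_AE)
    show "(\<lambda>x. indicator {0<..<T} x *\<^sub>R (complex_of_real (indicator {..b} x) * exp (- complex_of_real x * z))) \<in> borel_measurable lborel"
      by measurable
    show "(\<lambda>x. indicator {0<..b} x *\<^sub>R exp (- complex_of_real x * z)) \<in> borel_measurable lborel"
      by measurable
    show "AE x in lborel. indicator {0<..<T} x *\<^sub>R (complex_of_real (indicator {..b} x) * exp (- complex_of_real x * z)) =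
        indicator {0<..b} x *\<^sub>R exp (- complex_of_real x * z)"
      using AE_lborel_singleton[of b]
    proof eventually_elim
      case (elim x)
      then show ?case using b by (auto simp: indicator_def)
    qed
  qed
  also have "\<dots> = (LBINT x=ereal 0..ereal b. exp (- complex_of_real x * z))"
    using b by (subst interval_integral_Ioc) (auto simp: set_lebesgue_integral_def)
  also have "\<dots> = (\<lambda>x. - exp (- complex_of_real x * z) / z) b - (\<lambda>x. - exp (- complex_of_real x * z) / z) 0"
  proof (rule interval_integral_FTC_finite)
    show "continuous_on {min 0 b..max 0 b} (\<lambda>x. exp (- complex_of_real x * z))"
      by (intro continuous_intros)
    fix x :: real
    have "((\<lambda>w. - exp (- w * z) / z) has_field_derivative exp (- complex_of_real x * z)) (at (complex_of_real x))"
      using z by (auto intro!: derivative_eq_intros simp: field_simps)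
    then show "((\<lambda>x. - exp (- complex_of_real x * z) / z) has_vector_derivative exp (- complex_of_real x * z))
        (at x within {min 0 b..max 0 b})"
      by (rule has_vector_derivative_real_field)
  qed
  also have "\<dots> = (1 - exp (- complex_of_real b * z)) / z"
    by (simp add: diff_divide_distrib)
  finally show ?thesis .
qed

lemma RL_atMost_pos:
  assumes b: "0 < b" "b \<le> T" and nu: "0 \<le> \<nu>"
  shows "RL \<nu> T (indicator {..b})"
  unfolding RL_def
proof (intro allI impI)
  fix e :: real assume e: "e > 0"
  define C where "C = 1 + exp (\<nu> * T)"
  have C: "C > 0" by (simp add: C_def add_pos_pos)
  show "\<exists>R. \<forall>z. - \<nu> \<le> Re z \<longrightarrow> R \<le> cmod z \<longrightarrow> cmod (LTr T (indicator {..b}) z) \<le> e"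
  proof (intro exI allI impI)
    fix z assume z: "-\<nu> \<le> Re z" "max 1 (C / e) \<le> cmod z"
    have z0: "z \<noteq> 0" using z by auto
    have nz: "cmod z > 0" using z0 by simp
    have "cmod (LTr T (indicator {..b}) z) = cmod (1 - exp (- complex_of_real b * z)) / cmod z"
      using LTr_interval[OF b z0] by (simp add: norm_divide)
    also have "\<dots> \<le> C / cmod z"
    proof (rule divide_right_mono)
      define w where "w = exp (- complex_of_real b * z)"
      have "cmod w \<le> exp (\<nu> * T)"
        unfolding w_def using b nu z by (intro exp_bound_H) auto
      moreover have "cmod (1 - w) \<le> 1 + cmod w"
        using norm_triangle_ineq4[of 1 w] by simp
      ultimately show "cmod (1 - exp (- complex_of_real b * z)) \<le> C"
        unfolding C_def w_def[symmetric] by linarith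
    qed simp
    also have "\<dots> \<le> e"
      using z e nz C by (simp add: divide_le_eq mult.commute)
    finally show "cmod (LTr T (indicator {..b}) z) \<le> e" .
  qed
qed

lemma RL_atMost:
  assumes T: "0 < T" and nu: "0 \<le> \<nu>"
  shows "RL \<nu> T (indicator {..a})"
proof (cases "a \<le> 0")
  case True
  show ?thesis by (rule RL_cong[OF _ RL_zero]) (use True in \<open>auto simp: indicator_def\<close>)
next
  case False
  have "RL \<nu> T (indicator {..min a T})"
    using False T nu by (intro RL_atMost_pos) auto
  then show ?thesis by (rule RL_cong[rotated]) (auto simp: indicator_def)
qed


lemma indicator_set_integrable:
  assumes "A \<in> sets borel"
  shows "set_integrable lborel {0<..<T} (indicator A :: real \<Rightarrow> real)"
proof -
  have eq: "(\<lambda>x. indicator {0<..<T} x *\<^sub>R indicator A x) = (indicator ({0<..<T} \<inter> A) :: real \<Rightarrow> real)"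
    by (auto simp: indicator_def fun_eq_iff)
  have "emeasure lborel ({0<..<T} \<inter> A) \<le> emeasure lborel {0<..<T}"
    by (rule emeasure_mono) auto
  also have "\<dots> < \<infinity>" by (cases "0 \<le> T") auto
  finally have "emeasure lborel ({0<..<T} \<inter> A) < \<infinity>" .
  then show ?thesis unfolding set_integrable_def eq
    using assms by (intro integrable_real_indicator) auto
qed

lemma L1_dominated:
  fixes S :: "real set" and s :: "nat \<Rightarrow> real \<Rightarrow> real" and h w :: "real \<Rightarrow> real"
  assumes s: "\<And>m. set_integrable lborel S (s m)" and h: "set_integrable lborel S h"
    and w: "set_integrable lborel S w"
    and lim: "\<And>x. x \<in> S \<Longrightarrow> (\<lambda>m. s m x) \<longlonglongrightarrow> h x"
    and bnd: "\<And>m x. x \<in> S \<Longrightarrow> \<bar>s m x\<bar> \<le> w x"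
  shows "(\<lambda>m. LINT x:S|lborel. \<bar>h x - s m x\<bar>) \<longlonglongrightarrow> 0"
proof -
  have "(\<lambda>m. integral\<^sup>L lborel (\<lambda>x. indicator S x *\<^sub>R \<bar>h x - s m x\<bar>)) \<longlonglongrightarrow> (integral\<^sup>L lborel (\<lambda>x::real. 0::real))"
  proof (rule Bochner_Integration.integral_dominated_convergence)
    show "(\<lambda>x::real. 0::real) \<in> borel_measurable lborel" by simp
    fix m
    have eq: "(\<lambda>x. indicator S x *\<^sub>R \<bar>h x - s m x\<bar>) = (\<lambda>x. \<bar>indicator S x *\<^sub>R h x - indicator S x *\<^sub>R s m x\<bar>)"
      by (auto simp: indicator_def fun_eq_iff)
    have "(\<lambda>x. indicator S x *\<^sub>R h x) \<in> borel_measurable lborel"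
      using h unfolding set_integrable_def by (rule borel_measurable_integrable)
    moreover have "(\<lambda>x. indicator S x *\<^sub>R s m x) \<in> borel_measurable lborel"
      using s[of m] unfolding set_integrable_def by (rule borel_measurable_integrable)
    ultimately show "(\<lambda>x. indicator S x *\<^sub>R \<bar>h x - s m x\<bar>) \<in> borel_measurable lborel"
      unfolding eq by measurable
    show "AE x in lborel. norm (indicator S x *\<^sub>R \<bar>h x - s m x\<bar>) \<le> indicator S x *\<^sub>R (\<bar>h x\<bar> + w x)"
    proof (rule AE_I2)
      fix x show "norm (indicator S x *\<^sub>R \<bar>h x - s m x\<bar>) \<le> indicator S x *\<^sub>R (\<bar>h x\<bar> + w x)"
        using bnd[of x m] by (auto simp: indicator_def)
    qed
  next
    show "integrable lborel (\<lambda>x. indicator S x *\<^sub>R (\<bar>h x\<bar> + w x))"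
      using set_integral_add(1)[OF set_integrable_abs[OF h] w] unfolding set_integrable_def .
    show "AE x in lborel. (\<lambda>m. indicator S x *\<^sub>R \<bar>h x - s m x\<bar>) \<longlonglongrightarrow> 0"
    proof (rule AE_I2)
      fix x show "(\<lambda>m. indicator S x *\<^sub>R \<bar>h x - s m x\<bar>) \<longlonglongrightarrow> 0"
      proof (cases "x \<in> S")
        case True
        have "(\<lambda>m. h x - s m x) \<longlonglongrightarrow> h x - h x"
          by (intro tendsto_intros lim True)
        then have "(\<lambda>m. \<bar>h x - s m x\<bar>) \<longlonglongrightarrow> 0"
          using tendsto_rabs_zero_iff by fastforce
        then show ?thesis using True by simp
      qed simp
    qed
  qed
  then show ?thesis unfolding set_lebesgue_integral_def by simp
qed

lemma RL_approx_seq: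
  assumes h: "set_integrable lborel {0<..<T} h" and nu: "0 \<le> \<nu>"
    and s: "\<And>m. set_integrable lborel {0<..<T} (s m)" "\<And>m. RL \<nu> T (s m)"
    and lim: "(\<lambda>m. LINT x:{0<..<T}|lborel. \<bar>h x - s m x\<bar>) \<longlonglongrightarrow> 0"
  shows "RL \<nu> T h"
proof (rule RL_approx[OF h nu])
  fix d :: real assume d: "d > 0"
  have "eventually (\<lambda>m. (LINT x:{0<..<T}|lborel. \<bar>h x - s m x\<bar>) < d) sequentially"
    using order_tendstoD(2)[OF lim d] .
  then obtain m where "(LINT x:{0<..<T}|lborel. \<bar>h x - s m x\<bar>) < d"
    by (auto simp: eventually_sequentially)
  then show "\<exists>g. set_integrable lborel {0<..<T} g \<and> RL \<nu> T g \<and> (LINT x:{0<..<T}|lborel. \<bar>h x - g x\<bar>) < d"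
    using s by blast
qed

lemma RL_borel:
  assumes T: "0 < T" and nu: "0 \<le> \<nu>" and A: "A \<in> sets borel"
  shows "RL \<nu> T (indicator A)"
proof -
  have sb: "sets borel = sigma_sets UNIV (range (atMost :: real \<Rightarrow> real set))"
    by (simp add: borel_eq_atMost sets_measure_of)
  have one: "RL \<nu> T (\<lambda>_. 1)"
    by (rule RL_cong[OF _ RL_atMost[OF T nu, of T]]) (auto simp: indicator_def)
  have one_int: "set_integrable lborel {0<..<T} (\<lambda>_. 1::real)"
    using indicator_set_integrable[of UNIV T] by simp
  from A have Asig: "A \<in> sigma_sets UNIV (range atMost)" using sb by simp
  show ?thesis
  proof (rule sigma_sets_induct_disjoint[of "range (atMost :: real \<Rightarrow> real set)" UNIV A "\<lambda>A. RL \<nu> T (indicator A)"])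
    show "Int_stable (range (atMost :: real \<Rightarrow> real set))"
      unfolding Int_stable_def
    proof (intro ballI)
      fix a b :: "real set" assume "a \<in> range atMost" "b \<in> range atMost"
      then obtain x y where "a = {..x}" "b = {..y}" by blast
      then show "a \<inter> b \<in> range atMost" by (intro image_eqI[where x="min x y"]) auto
    qed
  next
    show "range (atMost :: real \<Rightarrow> real set) \<subseteq> Pow UNIV" by simp
  next
    show "A \<in> sigma_sets UNIV (range atMost)" by (rule Asig)
  next
    fix A :: "real set" assume "A \<in> range atMost"
    then obtain a where "A = {..a}" by blast
    then show "RL \<nu> T (indicator A)" using RL_atMost[OF T nu] by simp
  next
    show "RL \<nu> T (indicator {})" by (rule RL_cong[OF _ RL_zero]) simp
  next
    fix A :: "real set"
    assume compl: "A \<in> sigma_sets UNIV (range atMost)" "RL \<nu> T (indicator A)"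
    have Ab: "A \<in> sets borel" using compl(1) sb by simp
    have i2: "set_integrable lborel {0<..<T} (\<lambda>x. (-1::real) * indicator A x)"
      by (rule set_integrable_mult_right[OF indicator_set_integrable[OF Ab]])
    have "RL \<nu> T (\<lambda>x. 1 + (-1) * indicator A x)"
      by (rule RL_add[OF one_int i2 nu one RL_scale[OF compl(2)]])
    then show "RL \<nu> T (indicator (UNIV - A))" by (rule RL_cong[rotated]) (auto simp: indicator_def)
  next
    fix A :: "nat \<Rightarrow> real set"
    assume union: "disjoint_family A" "range A \<subseteq> sigma_sets UNIV (range atMost)" "\<And>i. RL \<nu> T (indicator (A i))"
    have Ab: "\<And>i. A i \<in> sets borel" unfolding sb using union(2) by blast
    define s where "s m = (indicator (\<Union>i<m. A i) :: real \<Rightarrow> real)" for m :: nat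
    have sb': "\<And>m. (\<Union>i<m. A i) \<in> sets borel" by (auto intro!: Ab)
    have Ub: "\<Union> (range A) \<in> sets borel" by (auto intro!: Ab)
    have s_int: "\<And>m. set_integrable lborel {0<..<T} (s m)"
      unfolding s_def by (rule indicator_set_integrable[OF sb'])
    have s_RL: "RL \<nu> T (s m)" for m
    proof (induction m)
      case 0 show ?case unfolding s_def by (rule RL_cong[OF _ RL_zero]) simp
    next
      case (Suc m)
      have 1: "RL \<nu> T (\<lambda>x. s m x + indicator (A m) x)"
        by (rule RL_add[OF s_int indicator_set_integrable[OF Ab[of m]] nu Suc union(3)])
      have 2: "s m x + indicator (A m) x = s (Suc m) x" for x
      proof -
        have nx: "x \<notin> A i" if "x \<in> A m" "i < m" for i
        proof -
          have "A i \<inter> A m = {}"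
            using union(1)[unfolded disjoint_family_on_def, rule_format, of i m] that(2) by simp
          then show ?thesis using that(1) by blast
        qed
        have "x \<in> A m \<Longrightarrow> x \<notin> (\<Union>i<m. A i)"
          using nx by blast
        then show ?thesis unfolding s_def by (auto simp: indicator_def lessThan_Suc)
      qed
      show ?case by (rule RL_cong[OF _ 1]) (rule 2)
    qed
    show "RL \<nu> T (indicator (\<Union> (range A)))"
    proof (rule RL_approx_seq[OF indicator_set_integrable[OF Ub] nu s_int s_RL])
      show "(\<lambda>m. LINT x:{0<..<T}|lborel. \<bar>indicator (\<Union> (range A)) x - s m x\<bar>) \<longlonglongrightarrow> 0"
      proof (rule L1_dominated[OF s_int indicator_set_integrable[OF Ub] one_int])
        show "\<bar>s m x\<bar> \<le> 1" for m x unfolding s_def by (simp add: indicator_def)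
        fix x
        show "(\<lambda>m. s m x) \<longlonglongrightarrow> indicator (\<Union> (range A)) x"
        proof (cases "x \<in> \<Union> (range A)")
          case True
          then obtain k where k: "x \<in> A k" by auto
          have "eventually (\<lambda>m. s m x = indicator (\<Union> (range A)) x) sequentially"
            unfolding eventually_sequentially
          proof (intro exI[of _ "Suc k"] allI impI)
            fix m assume "Suc k \<le> m"
            then have "x \<in> (\<Union>i<m. A i)" using k by auto
            then show "s m x = indicator (\<Union> (range A)) x" using True unfolding s_def by simp
          qed
          then show ?thesis by (rule tendsto_eventually)
        next
          case False
          then have "s m x = indicator (\<Union> (range A)) x" for m
            unfolding s_def by (auto simp: indicator_def)
          then show ?thesis by simp
        qed
      qed
    qed
  qed
qed

lemma RL_integrable:
  fixes f :: "real \<Rightarrow> real"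
  assumes T: "0 < T" and nu: "0 \<le> \<nu>" and f: "integrable lborel f"
  shows "RL \<nu> T f"
  using f
proof (induction rule: integrable_induct)
  case (base A c)
  have "RL \<nu> T (\<lambda>x. c * indicator A x)"
    using base by (intro RL_scale RL_borel[OF T nu]) auto
  then show ?case by (simp add: mult.commute)
next
  case (add f g)
  show ?case
    using add integrable_mult_indicator[of "{0<..<T}" lborel f] integrable_mult_indicator[of "{0<..<T}" lborel g] nu
    by (intro RL_add) (auto simp: set_integrable_def)
next
  case (lim f s)
  have si: "\<And>i. set_integrable lborel {0<..<T} (s i)"
    unfolding set_integrable_def by (rule integrable_mult_indicator) (auto intro: lim(1))
  have fint: "integrable lborel f" using lim by blast
  have fi: "set_integrable lborel {0<..<T} f"
    unfolding set_integrable_def by (rule integrable_mult_indicator) (auto intro: fint)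
  have sRL: "\<And>i. RL \<nu> T (s i)" using lim by blast
  have slim: "\<And>x. (\<lambda>i. s i x) \<longlonglongrightarrow> f x" using lim by simp
  have sbnd: "\<And>i x. \<bar>s i x\<bar> \<le> 2 * \<bar>f x\<bar>" using lim by simp
  show ?case
  proof (rule RL_approx_seq[OF fi nu si sRL])
    show "(\<lambda>m. LINT x:{0<..<T}|lborel. \<bar>f x - s m x\<bar>) \<longlonglongrightarrow> 0"
    proof (rule L1_dominated[OF si fi])
      show "set_integrable lborel {0<..<T} (\<lambda>x. 2 * \<bar>f x\<bar>)"
        using fi by (intro set_integrable_mult_right set_integrable_abs)
      show "\<And>x. x \<in> {0<..<T} \<Longrightarrow> (\<lambda>m. s m x) \<longlonglongrightarrow> f x" using slim by simp
      show "\<And>m x. x \<in> {0<..<T} \<Longrightarrow> \<bar>s m x\<bar> \<le> 2 * \<bar>f x\<bar>" using sbnd by simp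
    qed
  qed
qed

lemma RL_set_integrable:
  assumes T: "0 < T" and nu: "0 \<le> \<nu>" and h: "set_integrable lborel {0<..<T} h"
  shows "RL \<nu> T h"
proof -
  have "RL \<nu> T (\<lambda>x. indicator {0<..<T} x *\<^sub>R h x)"
    using h unfolding set_integrable_def by (rule RL_integrable[OF T nu])
  then show ?thesis by (rule RL_cong[rotated]) auto
qed


lemma LT_meas:
  assumes h: "set_integrable lborel {0<..<T} h"
  shows "(\<lambda>x. indicator {0<..<T} x *\<^sub>R (complex_of_real (h x) * exp (- complex_of_real x * z))) \<in> borel_measurable lborel"
proof -
  have m: "(\<lambda>x. indicator {0<..<T} x *\<^sub>R h x) \<in> borel_measurable lborel"
    using h unfolding set_integrable_def by auto
  have "(\<lambda>x. indicator {0<..<T} x *\<^sub>R (complex_of_real (h x) * exp (- complex_of_real x * z)))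
      = (\<lambda>x. complex_of_real (indicator {0<..<T} x *\<^sub>R h x) * exp (- complex_of_real x * z))"
    by (auto simp: indicator_def fun_eq_iff)
  moreover have "(\<lambda>x. complex_of_real (indicator {0<..<T} x *\<^sub>R h x) * exp (- complex_of_real x * z)) \<in> borel_measurable lborel"
    using m by measurable
  ultimately show ?thesis by simp
qed

lemma LTr_cont:
  assumes h: "set_integrable lborel {0<..<T} h" and nu: "0 \<le> \<nu>"
  shows "continuous_on {z. -\<nu> \<le> Re z} (LTr T h)"
  unfolding continuous_on_sequentially
proof (intro allI ballI impI)
  fix x :: "nat \<Rightarrow> complex" and a assume a: "a \<in> {z. -\<nu> \<le> Re z}"
    and x: "(\<forall>n. x n \<in> {z. -\<nu> \<le> Re z}) \<and> x \<longlonglongrightarrow> a"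
  show "(LTr T h \<circ> x) \<longlonglongrightarrow> LTr T h a"
    unfolding comp_def LTr_def set_lebesgue_integral_def
  proof (rule Bochner_Integration.integral_dominated_convergence)
    show "(\<lambda>\<eta>. indicator {0<..<T} \<eta> *\<^sub>R (complex_of_real (h \<eta>) * exp (- complex_of_real \<eta> * a))) \<in> borel_measurable lborel"
      by (rule LT_meas[OF h])
    fix n
    show "(\<lambda>\<eta>. indicator {0<..<T} \<eta> *\<^sub>R (complex_of_real (h \<eta>) * exp (- complex_of_real \<eta> * x n))) \<in> borel_measurable lborel"
      by (rule LT_meas[OF h])
    show "AE \<eta> in lborel. norm (indicator {0<..<T} \<eta> *\<^sub>R (complex_of_real (h \<eta>) * exp (- complex_of_real \<eta> * x n)))
           \<le> indicator {0<..<T} \<eta> *\<^sub>R (exp (\<nu> * T) * \<bar>h \<eta>\<bar>)"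
    proof (rule AE_I2)
      fix \<eta> show "norm (indicator {0<..<T} \<eta> *\<^sub>R (complex_of_real (h \<eta>) * exp (- complex_of_real \<eta> * x n)))
           \<le> indicator {0<..<T} \<eta> *\<^sub>R (exp (\<nu> * T) * \<bar>h \<eta>\<bar>)"
      proof (cases "\<eta> \<in> {0<..<T}")
        case True
        have "cmod (exp (- complex_of_real \<eta> * x n)) \<le> exp (\<nu> * T)"
          using True nu x by (intro exp_bound_H) auto
        then have "\<bar>h \<eta>\<bar> * cmod (exp (- complex_of_real \<eta> * x n)) \<le> \<bar>h \<eta>\<bar> * exp (\<nu> * T)"
          by (simp add: mult_left_mono)
        then show ?thesis using True by (simp add: norm_mult mult.commute)
      qed simp
    qed
  next
    show "integrable lborel (\<lambda>\<eta>. indicator {0<..<T} \<eta> *\<^sub>R (exp (\<nu> * T) * \<bar>h \<eta>\<bar>))"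
      using set_integrable_mult_right[OF set_integrable_abs[OF h], of "exp (\<nu> * T)"]
      unfolding set_integrable_def .
    show "AE \<eta> in lborel. (\<lambda>n. indicator {0<..<T} \<eta> *\<^sub>R (complex_of_real (h \<eta>) * exp (- complex_of_real \<eta> * x n)))
       \<longlonglongrightarrow> indicator {0<..<T} \<eta> *\<^sub>R (complex_of_real (h \<eta>) * exp (- complex_of_real \<eta> * a))"
      using x by (intro AE_I2 tendsto_intros) auto
  qed
qed

definition ser :: "(nat \<Rightarrow> real) \<Rightarrow> (nat \<Rightarrow> real) \<Rightarrow> complex \<Rightarrow> complex" where
  "ser c t z = (\<Sum>k. complex_of_real (c k) * exp (- complex_of_real (t k) * z))"

lemma ser_term_bound:
  assumes t: "0 \<le> t k" "t k \<le> Tm" and nu: "0 \<le> \<nu>" "-\<nu> \<le> Re z"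
  shows "norm (complex_of_real (c k) * exp (- complex_of_real (t k) * z)) \<le> \<bar>c k\<bar> * exp (\<nu> * Tm)"
proof -
  have "cmod (exp (- complex_of_real (t k) * z)) \<le> exp (\<nu> * Tm)"
    using t nu by (intro exp_bound_H) auto
  then show ?thesis by (simp add: norm_mult mult_left_mono)
qed

lemma ser_norm_le:
  assumes c: "summable (\<lambda>k. \<bar>c k\<bar>)" and t: "\<And>k. 0 \<le> t k \<and> t k \<le> Tm" and nu: "0 \<le> \<nu>" "-\<nu> \<le> Re z"
  shows "cmod (ser c t z) \<le> (\<Sum>k. \<bar>c k\<bar>) * exp (\<nu> * Tm)"
proof -
  have "cmod (ser c t z) \<le> (\<Sum>k. \<bar>c k\<bar> * exp (\<nu> * Tm))"
    unfolding ser_def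
  proof (rule norm_suminf_le)
    fix k show "norm (complex_of_real (c k) * exp (- complex_of_real (t k) * z)) \<le> \<bar>c k\<bar> * exp (\<nu> * Tm)"
      by (rule ser_term_bound) (use t nu in auto)
  qed (rule summable_mult2[OF c])
  also have "\<dots> = (\<Sum>k. \<bar>c k\<bar>) * exp (\<nu> * Tm)"
    by (rule suminf_mult2[symmetric, OF c])
  finally show ?thesis .
qed

lemma ser_cont:
  assumes c: "summable (\<lambda>k. \<bar>c k\<bar>)" and t: "\<And>k. 0 \<le> t k \<and> t k \<le> Tm" and nu: "0 \<le> \<nu>"
  shows "continuous_on {z. -\<nu> \<le> Re z} (ser c t)"
proof -
  have "uniform_limit {z. -\<nu> \<le> Re z} (\<lambda>n z. \<Sum>k<n. complex_of_real (c k) * exp (- complex_of_real (t k) * z))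
     (\<lambda>z. \<Sum>k. complex_of_real (c k) * exp (- complex_of_real (t k) * z)) sequentially"
  proof (rule Weierstrass_m_test[where M = "\<lambda>k. \<bar>c k\<bar> * exp (\<nu> * Tm)"])
    fix k z assume "z \<in> {z. -\<nu> \<le> Re z}"
    then show "norm (complex_of_real (c k) * exp (- complex_of_real (t k) * z)) \<le> \<bar>c k\<bar> * exp (\<nu> * Tm)"
      by (intro ser_term_bound) (use t nu in auto)
  qed (rule summable_mult2[OF c])
  then have "continuous_on {z. -\<nu> \<le> Re z} (\<lambda>z. \<Sum>k. complex_of_real (c k) * exp (- complex_of_real (t k) * z))"
    by (rule uniform_limit_theorem[rotated]) (auto intro!: always_eventually continuous_intros)
  then show ?thesis unfolding ser_def[abs_def] .
qed



lemma pick_lessThan: "i < n \<Longrightarrow> pick {..<n} i = i"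
proof -
  assume i: "i < n"
  have "{a \<in> {..<n}. a < i} = {..<i}" using i by auto
  then have "card {a \<in> {..<n}. a < i} = i" by simp
  then show ?thesis using pick_card_in_set[of i "{..<n}"] i by simp
qed

lemma submatrix_lessThan_rows:
  assumes "dim_row X = n"
  shows "submatrix X {..<n} J = submatrix X UNIV J"
proof (rule eq_matI)
  have c: "{i. i < dim_row X \<and> i \<in> {..<n}} = {i. i < dim_row X \<and> i \<in> UNIV}" using assms by auto
  show "dim_row (submatrix X {..<n} J) = dim_row (submatrix X UNIV J)"
    unfolding dim_submatrix c ..
  show "dim_col (submatrix X {..<n} J) = dim_col (submatrix X UNIV J)"
    unfolding dim_submatrix ..
  fix i k assume ik: "i < dim_row (submatrix X UNIV J)" "k < dim_col (submatrix X UNIV J)"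
  then have i': "i < card {i. i < dim_row X \<and> i \<in> UNIV}" and k': "k < card {j. j < dim_col X \<and> j \<in> J}"
    unfolding dim_submatrix by auto
  then have "i < n" using assms by simp
  then show "submatrix X {..<n} J $$ (i, k) = submatrix X UNIV J $$ (i, k)"
    using submatrix_index[OF i' k'] submatrix_index[OF i'[unfolded c[symmetric]] k']
    by (simp add: pick_lessThan pick_UNIV)
qed

lemma (in vec_space) minor_nonzero:
  assumes X: "X \<in> carrier_mat n (Suc n)" and r: "rank X = n"
  shows "\<exists>j<Suc n. det (submatrix X UNIV ({..<Suc n} - {j})) \<noteq> 0"
proof -
  obtain S where S: "maximal S (\<lambda>T. T \<subseteq> set (cols X) \<and> lin_indpt T)"
    using maximal_exists[of "(\<lambda>T. T \<subseteq> set (cols X) \<and> lin_indpt T)" "card (set (cols X))" "{}"]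
    by (meson List.finite_set card_mono empty_iff empty_subsetI finite_lin_indpt2 rev_finite_subset)
  have cardS: "card S = n" using rank_card_indpt[OF X S] r by simp
  have Ssub: "S \<subseteq> set (cols X)" and Sind: "lin_indpt S" using S by (auto simp: maximal_def)
  have fS: "finite S" using Ssub finite_subset by auto
  define g where "g s = (SOME i. i < Suc n \<and> col X i = s)" for s
  have g: "g s < Suc n \<and> col X (g s) = s" if "s \<in> S" for s
  proof -
    from that Ssub have "s \<in> set (cols X)" by auto
    then obtain i where "i < length (cols X)" "s = cols X ! i" by (auto simp: in_set_conv_nth)
    then have "i < Suc n \<and> col X i = s" using X by simp
    then have "\<exists>i. i < Suc n \<and> col X i = s" by blast
    then show ?thesis unfolding g_def by (rule someI_ex)
  qed
  have "\<not> {..<Suc n} \<subseteq> g ` S"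
  proof
    assume "{..<Suc n} \<subseteq> g ` S"
    then have "card {..<Suc n} \<le> card (g ` S)" by (intro card_mono) (use fS in auto)
    also have "\<dots> \<le> n" using card_image_le[OF fS, of g] cardS by simp
    finally show False by simp
  qed
  then obtain j where j: "j < Suc n" "j \<notin> g ` S" by auto
  define J where "J = {..<Suc n} - {j}"
  define Y where "Y = submatrix X UNIV J"
  have JJ: "{c. c < Suc n \<and> c \<in> J} = J" unfolding J_def by auto
  have cardJ: "card J = n" unfolding J_def using j by simp
  have cardJ': "card {c. c < dim_col X \<and> c \<in> J} = n" using X JJ cardJ by simp
  have cardR: "card {i. i < dim_row X \<and> i \<in> UNIV} = n" using X by simp
  have Y: "Y \<in> carrier_mat n n"
    unfolding Y_def by (rule carrier_matI) (use X JJ cardJ in \<open>simp_all add: dim_submatrix\<close>)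
  have colY: "col Y k = col X (pick J k)" if k: "k < n" for k
  proof (rule eq_vecI)
    show "dim_vec (col Y k) = dim_vec (col X (pick J k))" using Y X by simp
    fix i assume "i < dim_vec (col X (pick J k))"
    then have i: "i < n" using X by simp
    have pk: "pick J k < Suc n" using pick_le[of k "Suc n" J] k JJ cardJ by simp
    have "col Y k $ i = Y $$ (i, k)" using Y i k by simp
    also have "\<dots> = X $$ (pick UNIV i, pick J k)"
      unfolding Y_def by (rule submatrix_index) (use i k cardJ' cardR in auto)
    also have "\<dots> = col X (pick J k) $ i" using X i pk by (simp add: pick_UNIV)
    finally show "col Y k $ i = col X (pick J k) $ i" .
  qed
  have "S \<subseteq> set (cols Y)"
  proof
    fix s assume s: "s \<in> S"
    define i where "i = g s"
    have i: "i < Suc n" "col X i = s" using g[OF s] by (auto simp: i_def)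
    have "i \<noteq> j" using j(2) s by (auto simp: i_def)
    then have iJ: "i \<in> J" using i unfolding J_def by auto
    define k where "k = card {a\<in>J. a < i}"
    have pk: "pick J k = i" unfolding k_def by (rule pick_card_in_set[OF iJ])
    have "{a\<in>J. a < i} \<subset> J" using iJ by auto
    then have "k < card J" unfolding k_def by (intro psubset_card_mono) (auto simp: J_def)
    then have k: "k < n" using cardJ by simp
    have "s = col Y k" using colY[OF k] pk i by simp
    then show "s \<in> set (cols Y)" using k Y by (auto simp: cols_def)
  qed
  then have "card S \<le> rank Y" by (rule rank_ge_card_indpt[OF Y _ Sind])
  moreover have "rank Y \<le> n" by (rule rank_le_nc[OF Y])
  ultimately have "rank Y = n" using cardS by simp
  then have "det Y \<noteq> 0" using det_rank_iff[OF Y] by simp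
  then show ?thesis using j unfolding Y_def J_def by blast
qed



lemma det_cont:
  fixes X :: "'x::topological_space \<Rightarrow> complex mat"
  assumes X: "\<And>z. z \<in> S \<Longrightarrow> X z \<in> carrier_mat m m"
    and c: "\<And>i j. i < m \<Longrightarrow> j < m \<Longrightarrow> continuous_on S (\<lambda>z. X z $$ (i,j))"
  shows "continuous_on S (\<lambda>z. det (X z))"
proof -
  have "continuous_on S (\<lambda>z. \<Sum>p | p permutes {0..<m}. of_int (sign p) * (\<Prod>i=0..<m. X z $$ (i, p i)))"
  proof (rule continuous_on_sum)
    fix p assume p: "p \<in> {p. p permutes {0..<m}}"
    show "continuous_on S (\<lambda>z. of_int (sign p) * (\<Prod>i=0..<m. X z $$ (i, p i)))"
    proof (rule continuous_on_mult[OF continuous_on_const], rule continuous_on_prod)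
      fix i assume i: "i \<in> {0..<m}"
      have pp: "p permutes {0..<m}" using p by simp
      have "p i \<in> {0..<m}" using permutes_in_image[OF pp] i by simp
      then show "continuous_on S (\<lambda>z. X z $$ (i, p i))" using i by (intro c) auto
    qed
  qed
  then show ?thesis
    by (rule continuous_on_cong[THEN iffD1, rotated 2]) (auto simp: det_def'[OF X])
qed

lemma bounded_times_null:
  assumes "eventually (\<lambda>x. norm (u x) \<le> K) F" and "(v \<longlongrightarrow> 0) F"
  shows "((\<lambda>x. u x * v x :: 'a :: real_normed_field) \<longlongrightarrow> 0) F"
proof (rule tendsto_0_le[OF assms(2), where K = K])
  show "eventually (\<lambda>x. norm (u x * v x) \<le> norm (v x) * K) F"
    using assms(1)
  proof eventually_elim
    case (elim x)
    have "norm (u x) * norm (v x) \<le> K * norm (v x)" by (rule mult_right_mono) (use elim in auto)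
    then show ?case by (simp add: norm_mult mult.commute)
  qed
qed

lemma prod_bound_eventually:
  fixes a :: "'i \<Rightarrow> 'x \<Rightarrow> 'a :: real_normed_field"
  assumes I: "finite I" and a: "\<And>i. i \<in> I \<Longrightarrow> eventually (\<lambda>x. norm (a i x) \<le> C) F"
  shows "eventually (\<lambda>x. norm (\<Prod>i\<in>I. a i x) \<le> C ^ card I) F"
proof -
  have "eventually (\<lambda>x. \<forall>i\<in>I. norm (a i x) \<le> C) F"
    using I a by (simp add: eventually_ball_finite)
  then show ?thesis
  proof eventually_elim
    case (elim x)
    have "norm (\<Prod>i\<in>I. a i x) = (\<Prod>i\<in>I. norm (a i x))" by (simp add: prod_norm)
    also have "\<dots> \<le> (\<Prod>i\<in>I. C)" using elim by (intro prod_mono) auto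
    also have "\<dots> = C ^ card I" by simp
    finally show ?case .
  qed
qed

lemma prod_pert_tendsto:
  fixes a b :: "'i \<Rightarrow> 'x \<Rightarrow> 'a :: real_normed_field"
  assumes I: "finite I" and a: "\<And>i. i \<in> I \<Longrightarrow> eventually (\<lambda>x. norm (a i x) \<le> C) F"
    and b: "\<And>i. i \<in> I \<Longrightarrow> (b i \<longlongrightarrow> 0) F"
  shows "((\<lambda>x. (\<Prod>i\<in>I. a i x + b i x) - (\<Prod>i\<in>I. a i x)) \<longlongrightarrow> 0) F"
  using I a b
proof (induction I rule: finite_induct)
  case empty
  then show ?case by simp
next
  case (insert j I)
  define P where "P x = (\<Prod>i\<in>I. a i x + b i x)" for x
  define Q where "Q x = (\<Prod>i\<in>I. a i x)" for x
  have IH: "((\<lambda>x. P x - Q x) \<longlongrightarrow> 0) F"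
    unfolding P_def Q_def using insert by auto
  have Qb: "eventually (\<lambda>x. norm (Q x) \<le> C ^ card I) F"
    unfolding Q_def using insert by (intro prod_bound_eventually) auto
  have eq: "(\<Prod>i\<in>insert j I. a i x + b i x) - (\<Prod>i\<in>insert j I. a i x)
      = a j x * (P x - Q x) + b j x * (P x - Q x) + b j x * Q x" for x
    using insert(1,2) by (simp add: P_def Q_def algebra_simps)
  have "((\<lambda>x. a j x * (P x - Q x) + b j x * (P x - Q x) + b j x * Q x) \<longlongrightarrow> 0 + 0 + 0) F"
  proof (intro tendsto_add)
    show "((\<lambda>x. a j x * (P x - Q x)) \<longlongrightarrow> 0) F"
      using insert by (intro bounded_times_null[OF _ IH]) auto
    show "((\<lambda>x. b j x * (P x - Q x)) \<longlongrightarrow> 0) F"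
      using tendsto_mult[OF insert(5)[of j] IH] by simp
    show "((\<lambda>x. b j x * Q x) \<longlongrightarrow> 0) F"
      using bounded_times_null[OF Qb insert(5)[of j]] by (simp add: mult.commute)
  qed
  then have "((\<lambda>x. a j x * (P x - Q x) + b j x * (P x - Q x) + b j x * Q x) \<longlongrightarrow> 0) F"
    by (simp only: add_0_left)
  then show ?case unfolding eq .
qed

lemma det_pert_tendsto:
  fixes D E :: "'x \<Rightarrow> 'a :: real_normed_field mat"
  assumes D: "\<And>x. D x \<in> carrier_mat m m" and E: "\<And>x. E x \<in> carrier_mat m m"
    and Db: "\<And>i j. i < m \<Longrightarrow> j < m \<Longrightarrow> eventually (\<lambda>x. norm (D x $$ (i,j)) \<le> C) F"
    and ED: "\<And>i j. i < m \<Longrightarrow> j < m \<Longrightarrow> ((\<lambda>x. E x $$ (i,j) - D x $$ (i,j)) \<longlongrightarrow> 0) F"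
  shows "((\<lambda>x. det (E x) - det (D x)) \<longlongrightarrow> 0) F"
proof -
  have eq: "det (E x) - det (D x) = (\<Sum>p | p permutes {0..<m}. of_int (sign p) *
     ((\<Prod>i=0..<m. D x $$ (i, p i) + (E x $$ (i, p i) - D x $$ (i, p i))) - (\<Prod>i=0..<m. D x $$ (i, p i))))" for x
    unfolding det_def'[OF E] det_def'[OF D] by (simp add: sum_subtractf[symmetric] algebra_simps)
  have "((\<lambda>x. \<Sum>p | p permutes {0..<m}. of_int (sign p) *
     ((\<Prod>i=0..<m. D x $$ (i, p i) + (E x $$ (i, p i) - D x $$ (i, p i))) - (\<Prod>i=0..<m. D x $$ (i, p i)))) \<longlongrightarrow> 0) F"
  proof (rule tendsto_null_sum)
    fix p assume p: "p \<in> {p. p permutes {0..<m}}"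
    have pp: "p permutes {0..<m}" using p by simp
    have pi: "\<And>i. i \<in> {0..<m} \<Longrightarrow> p i < m" using permutes_in_image[OF pp] by simp
    show "((\<lambda>x. of_int (sign p) *
     ((\<Prod>i=0..<m. D x $$ (i, p i) + (E x $$ (i, p i) - D x $$ (i, p i))) - (\<Prod>i=0..<m. D x $$ (i, p i)))) \<longlongrightarrow> 0) F"
      by (rule tendsto_mult_right_zero, rule prod_pert_tendsto[where C = C]) (use pi Db ED in auto)
  qed
  then show ?thesis unfolding eq .
qed



lemma Delta0_entry:
  "i < n \<Longrightarrow> l < n \<Longrightarrow> Delta0 n A \<tau> z $$ (i,l) = (if i = l then 1 else 0) - ser (\<lambda>k. A k $$ (i,l)) \<tau> z"
  by (simp add: Delta0_def ser_def)

lemma qfun_entry: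
  "i < n \<Longrightarrow> l < n \<Longrightarrow> qfun n A \<tau> \<tau>s N z $$ (i,l) = Delta0 n A \<tau> z $$ (i,l) - LTr \<tau>s (\<lambda>x. N x $$ (i,l)) z"
  by (simp add: qfun_def LTr_def)

lemma pfun_entry:
  "i < n \<Longrightarrow> pfun n B \<theta> \<theta>s M z $$ (i,0) = ser (\<lambda>j. B j $$ (i,0)) \<theta> z + LTr \<theta>s (\<lambda>x. vec_index (M x) i) z"
  by (simp add: pfun_def LTr_def ser_def)

lemma aug_entry:
  "i < n \<Longrightarrow> k < Suc n \<Longrightarrow> aug_mat n Q P $$ (i,k) = (if k < n then Q $$ (i,k) else - (P $$ (i,0)))"
  by (simp add: aug_mat_def)

lemma aug_carrier: "aug_mat n Q P \<in> carrier_mat n (Suc n)"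
  by (simp add: aug_mat_def)

lemma Delta0_carrier: "Delta0 n A \<tau> z \<in> carrier_mat n n"
  by (simp add: Delta0_def)

lemma qfun_carrier: "qfun n A \<tau> \<tau>s N z \<in> carrier_mat n n"
  by (simp add: qfun_def)

lemma entry_le_mat_abs_norm:
  assumes X: "X \<in> carrier_mat r c" and i: "i < r" and l: "l < c"
  shows "\<bar>X $$ (i,l)\<bar> \<le> mat_abs_norm X"
proof -
  have "\<bar>X $$ (i,l)\<bar> \<le> (\<Sum>l'<c. \<bar>X $$ (i,l')\<bar>)"
    by (rule member_le_sum) (use l in auto)
  also have "\<dots> \<le> (\<Sum>i'<r. \<Sum>l'<c. \<bar>X $$ (i',l')\<bar>)"
    by (rule member_le_sum[where f = "\<lambda>i'. \<Sum>l'<c. \<bar>X $$ (i',l')\<bar>"]) (use i in \<open>auto intro: sum_nonneg\<close>)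
  also have "\<dots> = mat_abs_norm X" using X by (simp add: mat_abs_norm_def)
  finally show ?thesis .
qed

lemma summable_entry:
  assumes X: "\<And>k. X k \<in> carrier_mat r c" and i: "i < r" and l: "l < c"
    and s: "summable (\<lambda>k. mat_abs_norm (X k))"
  shows "summable (\<lambda>k. \<bar>X k $$ (i,l)\<bar>)" "(\<Sum>k. \<bar>X k $$ (i,l)\<bar>) \<le> (\<Sum>k. mat_abs_norm (X k))"
proof -
  have le: "\<And>k. \<bar>X k $$ (i,l)\<bar> \<le> mat_abs_norm (X k)"
    using entry_le_mat_abs_norm[OF X i l] .
  show su: "summable (\<lambda>k. \<bar>X k $$ (i,l)\<bar>)"
    by (rule summable_comparison_test[OF _ s]) (use le in auto)
  show "(\<Sum>k. \<bar>X k $$ (i,l)\<bar>) \<le> (\<Sum>k. mat_abs_norm (X k))"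
    by (rule suminf_le[OF le su s])
qed

lemma abs_le_1_plus_sq: "\<bar>y::real\<bar> \<le> 1 + y\<^sup>2"
proof (cases "\<bar>y\<bar> \<le> 1")
  case True
  then show ?thesis by (simp add: add_increasing2)
next
  case False
  then have "1 * \<bar>y\<bar> \<le> \<bar>y\<bar> * \<bar>y\<bar>" by (intro mult_right_mono) auto
  moreover have "\<bar>y\<bar> * \<bar>y\<bar> = y\<^sup>2" by (simp add: power2_eq_square)
  ultimately show ?thesis by linarith
qed

lemma L2_imp_L1:
  assumes "L2_on {0<..<T} f"
  shows "set_integrable lborel {0<..<T} f"
proof -
  have m: "set_borel_measurable lborel {0<..<T} f" and sq: "set_integrable lborel {0<..<T} (\<lambda>x. (f x)^2)"
    using assms by (auto simp: L2_on_def)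
  have one: "set_integrable lborel {0<..<T} (\<lambda>_. 1::real)"
    using indicator_set_integrable[of UNIV T] by simp
  have g: "set_integrable lborel {0<..<T} (\<lambda>x. 1 + (f x)^2)"
    by (rule set_integral_add(1)[OF one sq])
  show ?thesis unfolding set_integrable_def
  proof (rule Bochner_Integration.integrable_bound[OF g[unfolded set_integrable_def]])
    show "(\<lambda>x. indicator {0<..<T} x *\<^sub>R f x) \<in> borel_measurable lborel"
      using m unfolding set_borel_measurable_def .
    show "AE x in lborel. norm (indicator {0<..<T} x *\<^sub>R f x) \<le> norm (indicator {0<..<T} x *\<^sub>R (1 + (f x)\<^sup>2))"
      by (rule AE_I2) (auto simp: indicator_def abs_le_1_plus_sq)
  qed
qed

lemma RL_tendsto:
  assumes "RL \<nu> T h"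
  shows "(LTr T h \<longlongrightarrow> 0) (inf at_infinity (principal {z. -\<nu> \<le> Re z}))"
proof (rule tendstoI)
  fix e :: real assume e: "e > 0"
  obtain R where R: "\<And>z. -\<nu> \<le> Re z \<Longrightarrow> R \<le> cmod z \<Longrightarrow> cmod (LTr T h z) \<le> e/2"
    using assms e unfolding RL_def by (meson half_gt_zero)
  show "eventually (\<lambda>z. dist (LTr T h z) 0 < e) (inf at_infinity (principal {z. -\<nu> \<le> Re z}))"
    unfolding eventually_inf_principal eventually_at_infinity
    using R e by (intro exI[of _ R]) force
qed

lemma rfun_last:
  "rfun n A \<tau> \<tau>s N B \<theta> \<theta>s M (n+1) z = det (qfun n A \<tau> \<tau>s N z)"
proof -
  let ?X = "aug_mat n (qfun n A \<tau> \<tau>s N z) (pfun n B \<theta> \<theta>s M z)"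
  have J: "{..<n+1} - {n + 1 - 1} = {..<n}" by auto
  have "submatrix ?X {..<n} {..<n} = qfun n A \<tau> \<tau>s N z"
  proof (rule eq_matI)
    have c1: "card {i. i < dim_row ?X \<and> i \<in> {..<n}} = n" by (simp add: aug_mat_def)
    have c2: "card {i. i < dim_col ?X \<and> i \<in> {..<n}} = n"
    proof -
      have "{i. i < dim_col ?X \<and> i \<in> {..<n}} = {..<n}" by (auto simp: aug_mat_def)
      then show ?thesis by simp
    qed
    show "dim_row (submatrix ?X {..<n} {..<n}) = dim_row (qfun n A \<tau> \<tau>s N z)"
      using c1 by (simp add: dim_submatrix qfun_def)
    show "dim_col (submatrix ?X {..<n} {..<n}) = dim_col (qfun n A \<tau> \<tau>s N z)"
      using c2 by (simp add: dim_submatrix qfun_def)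
    fix i k assume "i < dim_row (qfun n A \<tau> \<tau>s N z)" "k < dim_col (qfun n A \<tau> \<tau>s N z)"
    then have ik: "i < n" "k < n" by (auto simp: qfun_def)
    have "submatrix ?X {..<n} {..<n} $$ (i,k) = ?X $$ (pick {..<n} i, pick {..<n} k)"
      by (rule submatrix_index) (use c1 c2 ik in auto)
    also have "\<dots> = ?X $$ (i,k)" using ik by (simp add: pick_lessThan)
    also have "\<dots> = qfun n A \<tau> \<tau>s N z $$ (i,k)" using ik by (simp add: aug_entry)
    finally show "submatrix ?X {..<n} {..<n} $$ (i,k) = qfun n A \<tau> \<tau>s N z $$ (i,k)" .
  qed
  then show ?thesis unfolding rfun_def J by simp
qed



theorem lemma4:
  fixes n :: nat
    and A :: "nat \<Rightarrow> real mat" and \<tau> :: "nat \<Rightarrow> real" and \<tau>s :: real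
    and B :: "nat \<Rightarrow> real mat" and \<theta> :: "nat \<Rightarrow> real" and \<theta>s :: real
    and N :: "real \<Rightarrow> real mat" and M :: "real \<Rightarrow> real vec"
    and \<nu>t \<eta> \<nu>b :: real
  assumes n_pos: "n > 0"
    and A_dim: "\<And>k. A k \<in> carrier_mat n n"
    and B_dim: "\<And>j. B j \<in> carrier_mat n 1"
    and AB_summable: "summable (\<lambda>k. mat_abs_norm (A k))" "summable (\<lambda>j. mat_abs_norm (B j))"
    and \<tau>s_pos: "\<tau>s > 0" and \<theta>s_pos: "\<theta>s > 0"
    and \<tau>_mono: "strict_mono \<tau>" and \<tau>_range: "\<And>k. 0 < \<tau> k \<and> \<tau> k \<le> \<tau>s"
    and \<theta>_mono: "strict_mono \<theta>" and \<theta>_range: "\<And>j. 0 \<le> \<theta> j \<and> \<theta> j \<le> \<theta>s"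
    and N_dim: "\<And>x. N x \<in> carrier_mat n n"
    and N_L2: "\<And>i l. i < n \<Longrightarrow> l < n \<Longrightarrow> L2_on {0<..<\<tau>s} (\<lambda>x. N x $$ (i,l))"
    and M_dim: "\<And>x. M x \<in> carrier_vec n"
    and M_L2: "\<And>i. i < n \<Longrightarrow> L2_on {0<..<\<theta>s} (\<lambda>x. vec_index (M x) i)"
    and A1: "\<nu>t > 0" "\<eta> > 0"
            "\<And>z. Re z > - \<nu>t \<Longrightarrow> cmod (Determinant.det (Delta0 n A \<tau> z)) > \<eta>"
    and A2: "\<nu>b > 0"
            "\<And>z. Re z > - \<nu>b \<Longrightarrow>
               vec_space.rank n
                 (aug_mat n (qfun n A \<tau> \<tau>s N z) (pfun n B \<theta> \<theta>s M z)) = n"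
  shows "\<And>\<nu>. 0 < \<nu> \<Longrightarrow> \<nu> < min \<nu>b \<nu>t \<Longrightarrow>
           (INF z\<in>{z. Re z > - \<nu>}. \<Sum>j=1..n+1. cmod (rfun n A \<tau> \<tau>s N B \<theta> \<theta>s M j z)) > 0"
proof -
  fix \<nu> :: real
  assume nu0: "0 < \<nu>" and numin: "\<nu> < min \<nu>b \<nu>t"
  define H where "H = {z. -\<nu> \<le> Re z}"
  define X where "X z = aug_mat n (qfun n A \<tau> \<tau>s N z) (pfun n B \<theta> \<theta>s M z)" for z
  define F where "F z = (\<Sum>j=1..n+1. cmod (rfun n A \<tau> \<tau>s N B \<theta> \<theta>s M j z))" for z
  have nu: "0 \<le> \<nu>" using nu0 by simp
  have inH_b: "Re z > -\<nu>b" if "z \<in> H" for z using that numin unfolding H_def by auto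
  have inH_t: "Re z > -\<nu>t" if "z \<in> H" for z using that numin unfolding H_def by auto
  have \<tau>': "\<And>k. 0 \<le> \<tau> k \<and> \<tau> k \<le> \<tau>s" using \<tau>_range by (simp add: less_imp_le)
  have Nint: "set_integrable lborel {0<..<\<tau>s} (\<lambda>x. N x $$ (i,l))" if "i < n" "l < n" for i l
    using N_L2[OF that] by (rule L2_imp_L1)
  have Mint: "set_integrable lborel {0<..<\<theta>s} (\<lambda>x. vec_index (M x) i)" if "i < n" for i
    using M_L2[OF that] by (rule L2_imp_L1)
  have Asum: "summable (\<lambda>k. \<bar>A k $$ (i,l)\<bar>)" if "i < n" "l < n" for i l
    by (rule summable_entry(1)[OF A_dim that AB_summable(1)])
  have Asum2: "(\<Sum>k. \<bar>A k $$ (i,l)\<bar>) \<le> (\<Sum>k. mat_abs_norm (A k))" if "i < n" "l < n" for i l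
    by (rule summable_entry(2)[OF A_dim that AB_summable(1)])
  have Bsum: "summable (\<lambda>j. \<bar>B j $$ (i,0)\<bar>)" if "i < n" for i
    by (rule summable_entry(1)[OF B_dim that _ AB_summable(2)]) simp

  have Xcont: "continuous_on H (\<lambda>z. X z $$ (a,c))" if ac: "a < n" "c < Suc n" for a c
  proof (cases "c < n")
    case True
    have "continuous_on H (\<lambda>z. ((if a = c then 1 else 0) - ser (\<lambda>k. A k $$ (a,c)) \<tau> z) - LTr \<tau>s (\<lambda>x. N x $$ (a,c)) z)"
      unfolding H_def using ser_cont[OF Asum[OF ac(1) True] \<tau>' nu] LTr_cont[OF Nint[OF ac(1) True] nu]
      by (intro continuous_intros) auto
    moreover have "X z $$ (a,c) = ((if a = c then 1 else 0) - ser (\<lambda>k. A k $$ (a,c)) \<tau> z) - LTr \<tau>s (\<lambda>x. N x $$ (a,c)) z" for z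
    proof -
      have "X z $$ (a,c) = qfun n A \<tau> \<tau>s N z $$ (a,c)" unfolding X_def using ac True by (simp add: aug_entry)
      also have "\<dots> = Delta0 n A \<tau> z $$ (a,c) - LTr \<tau>s (\<lambda>x. N x $$ (a,c)) z" by (rule qfun_entry[OF ac(1) True])
      also have "\<dots> = ((if a = c then 1 else 0) - ser (\<lambda>k. A k $$ (a,c)) \<tau> z) - LTr \<tau>s (\<lambda>x. N x $$ (a,c)) z"
        by (simp only: Delta0_entry[OF ac(1) True])
      finally show ?thesis .
    qed
    ultimately show ?thesis by simp
  next
    case False
    have "continuous_on H (\<lambda>z. - (ser (\<lambda>j. B j $$ (a,0)) \<theta> z + LTr \<theta>s (\<lambda>x. vec_index (M x) a) z))"
      unfolding H_def using ser_cont[OF Bsum[OF ac(1)] \<theta>_range nu] LTr_cont[OF Mint[OF ac(1)] nu]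
      by (intro continuous_intros) auto
    moreover have "X z $$ (a,c) = - (ser (\<lambda>j. B j $$ (a,0)) \<theta> z + LTr \<theta>s (\<lambda>x. vec_index (M x) a) z)" for z
    proof -
      have "X z $$ (a,c) = - (pfun n B \<theta> \<theta>s M z $$ (a,0))" unfolding X_def using ac False by (simp add: aug_entry)
      also have "\<dots> = - (ser (\<lambda>j. B j $$ (a,0)) \<theta> z + LTr \<theta>s (\<lambda>x. vec_index (M x) a) z)"
        by (simp only: pfun_entry[OF ac(1)])
      finally show ?thesis .
    qed
    ultimately show ?thesis by simp
  qed

  have rcont: "continuous_on H (rfun n A \<tau> \<tau>s N B \<theta> \<theta>s M j)" if j: "j \<in> {1..n+1}" for j
  proof -
    define J where "J = {..<n+1} - {j-1}"
    have JJ: "{c. c < Suc n \<and> c \<in> J} = J" unfolding J_def by auto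
    have cardJ: "card J = n" unfolding J_def using j by auto
    have dX: "dim_row (X z) = n" "dim_col (X z) = Suc n" for z unfolding X_def by (simp_all add: aug_mat_def)
    have cJ: "card {c. c < dim_col (X z) \<and> c \<in> J} = n" for z using JJ cardJ dX by simp
    have cR: "card {i. i < dim_row (X z) \<and> i \<in> {..<n}} = n" for z
    proof -
      have "{i. i < dim_row (X z) \<and> i \<in> {..<n}} = {..<n}" using dX(1)[of z] by auto
      then show ?thesis by (metis card_lessThan)
    qed
    have carr: "submatrix (X z) {..<n} J \<in> carrier_mat n n" for z
      by (rule carrier_matI) (simp_all only: dim_submatrix cJ cR)
    have "continuous_on H (\<lambda>z. det (submatrix (X z) {..<n} J))"
    proof (rule det_cont[OF carr])
      fix a b assume ab: "a < n" "b < n"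
      have pb: "pick J b < Suc n" using pick_le[of b "Suc n" J] ab JJ cardJ by simp
      have "continuous_on H (\<lambda>z. X z $$ (a, pick J b))" by (rule Xcont) (use ab pb in auto)
      moreover have "submatrix (X z) {..<n} J $$ (a,b) = X z $$ (a, pick J b)" for z
      proof -
        have "submatrix (X z) {..<n} J $$ (a,b) = X z $$ (pick {..<n} a, pick J b)"
          by (rule submatrix_index) (use ab cJ cR in auto)
        then show ?thesis using ab by (simp add: pick_lessThan)
      qed
      ultimately show "continuous_on H (\<lambda>z. submatrix (X z) {..<n} J $$ (a,b))" by simp
    qed
    moreover have "rfun n A \<tau> \<tau>s N B \<theta> \<theta>s M j = (\<lambda>z. det (submatrix (X z) {..<n} J))"
      by (rule ext) (simp add: rfun_def X_def J_def)
    ultimately show ?thesis by simp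
  qed

  have Fcont: "continuous_on H F"
    unfolding F_def[abs_def]
  proof (rule continuous_on_sum)
    fix j assume "j \<in> {1..n+1}"
    then show "continuous_on H (\<lambda>z. cmod (rfun n A \<tau> \<tau>s N B \<theta> \<theta>s M j z))"
      by (intro continuous_on_norm rcont)
  qed

  have Fpos: "F z > 0" if z: "z \<in> H" for z
  proof -
    have rk: "vec_space.rank n (X z) = n" using A2(2)[OF inH_b[OF z]] unfolding X_def .
    obtain j where j: "j < Suc n" "det (submatrix (X z) UNIV ({..<Suc n} - {j})) \<noteq> 0"
      using vec_space.minor_nonzero[OF aug_carrier rk[unfolded X_def]] unfolding X_def by blast
    have dX: "dim_row (X z) = n" unfolding X_def by (simp add: aug_mat_def)
    have "rfun n A \<tau> \<tau>s N B \<theta> \<theta>s M (j+1) z = det (submatrix (X z) UNIV ({..<Suc n} - {j}))"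
      unfolding rfun_def X_def[symmetric] using submatrix_lessThan_rows[OF dX] by simp
    then have "0 < cmod (rfun n A \<tau> \<tau>s N B \<theta> \<theta>s M (j+1) z)" using j(2) by simp
    also have "\<dots> \<le> F z" unfolding F_def by (rule member_le_sum) (use j in auto)
    finally show ?thesis .
  qed

  define Fl where "Fl = inf at_infinity (principal H)"
  define C where "C = 1 + (\<Sum>k. mat_abs_norm (A k)) * exp (\<nu> * \<tau>s)"
  have Dbound: "cmod (Delta0 n A \<tau> z $$ (i,l)) \<le> C" if z: "z \<in> H" and il: "i < n" "l < n" for z i l
  proof -
    have "cmod (ser (\<lambda>k. A k $$ (i,l)) \<tau> z) \<le> (\<Sum>k. \<bar>A k $$ (i,l)\<bar>) * exp (\<nu> * \<tau>s)"
      by (rule ser_norm_le[OF Asum[OF il] \<tau>' nu]) (use z in \<open>simp add: H_def\<close>)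
    also have "\<dots> \<le> (\<Sum>k. mat_abs_norm (A k)) * exp (\<nu> * \<tau>s)"
      by (rule mult_right_mono[OF Asum2[OF il]]) simp
    finally have s: "cmod (ser (\<lambda>k. A k $$ (i,l)) \<tau> z) \<le> (\<Sum>k. mat_abs_norm (A k)) * exp (\<nu> * \<tau>s)" .
    have "cmod (Delta0 n A \<tau> z $$ (i,l)) \<le> cmod (if i = l then 1 else 0 :: complex) + cmod (ser (\<lambda>k. A k $$ (i,l)) \<tau> z)"
      unfolding Delta0_entry[OF il] by (rule norm_triangle_ineq4)
    also have "\<dots> \<le> C"
    proof -
      have "cmod (if i = l then 1 else 0 :: complex) \<le> 1" by simp
      then show ?thesis unfolding C_def using s by linarith
    qed
    finally show ?thesis .
  qed
  have lim: "((\<lambda>z. det (qfun n A \<tau> \<tau>s N z) - det (Delta0 n A \<tau> z)) \<longlongrightarrow> 0) Fl"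
  proof (rule det_pert_tendsto[OF Delta0_carrier qfun_carrier])
    fix i l assume il: "i < n" "l < n"
    show "eventually (\<lambda>z. norm (Delta0 n A \<tau> z $$ (i,l)) \<le> C) Fl"
      unfolding Fl_def eventually_inf_principal using Dbound il by (intro always_eventually) auto
    have "((\<lambda>z. - LTr \<tau>s (\<lambda>x. N x $$ (i,l)) z) \<longlongrightarrow> - 0) Fl"
      unfolding Fl_def H_def by (intro tendsto_minus RL_tendsto RL_set_integrable[OF \<tau>s_pos nu Nint[OF il]])
    then show "((\<lambda>z. qfun n A \<tau> \<tau>s N z $$ (i,l) - Delta0 n A \<tau> z $$ (i,l)) \<longlongrightarrow> 0) Fl"
      by (simp add: qfun_entry[OF il])
  qed
  have "eventually (\<lambda>z. dist (det (qfun n A \<tau> \<tau>s N z) - det (Delta0 n A \<tau> z)) 0 < \<eta>/2) Fl"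
    using tendstoD[OF lim, of "\<eta>/2"] A1(2) by simp
  then obtain R where R: "\<And>z. R \<le> cmod z \<Longrightarrow> z \<in> H \<Longrightarrow> cmod (det (qfun n A \<tau> \<tau>s N z) - det (Delta0 n A \<tau> z)) < \<eta>/2"
    unfolding Fl_def eventually_inf_principal eventually_at_infinity by (auto simp: dist_norm)
  have Flarge: "\<eta>/2 \<le> F z" if z: "z \<in> H" "R \<le> cmod z" for z
  proof -
    have "\<eta> < cmod (det (Delta0 n A \<tau> z))" using A1(3)[OF inH_t[OF z(1)]] .
    moreover have "cmod (det (Delta0 n A \<tau> z)) \<le> cmod (det (qfun n A \<tau> \<tau>s N z)) + cmod (det (qfun n A \<tau> \<tau>s N z) - det (Delta0 n A \<tau> z))"
      by (metis norm_minus_commute norm_triangle_sub)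
    moreover note R[OF z(2,1)]
    ultimately have "\<eta>/2 < cmod (det (qfun n A \<tau> \<tau>s N z))" by linarith
    also have "\<dots> = cmod (rfun n A \<tau> \<tau>s N B \<theta> \<theta>s M (n+1) z)" using rfun_last[of n A \<tau> \<tau>s N B \<theta> \<theta>s M z] by simp
    also have "\<dots> \<le> F z" unfolding F_def by (rule member_le_sum) auto
    finally show ?thesis by simp
  qed

  define K where "K = cball 0 R \<inter> H"
  have Hclosed: "closed H" unfolding H_def by (intro closed_Collect_le continuous_intros)
  have Kc: "compact K" unfolding K_def by (intro compact_Int_closed compact_cball Hclosed)
  obtain c where c: "c > 0" "\<And>z. z \<in> H \<Longrightarrow> c \<le> F z"
  proof (cases "K = {}")
    case True
    show ?thesis
    proof (rule that[of "\<eta>/2"])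
      show "\<eta>/2 > 0" using A1(2) by simp
      fix z assume z: "z \<in> H"
      have "R \<le> cmod z"
      proof (rule ccontr)
        assume "\<not> R \<le> cmod z"
        then have "z \<in> cball 0 R \<inter> H" using z by (simp add: mem_cball_0)
        then show False using True unfolding K_def by simp
      qed
      then show "\<eta>/2 \<le> F z" using Flarge z by simp
    qed
  next
    case False
    obtain z0 where z0: "z0 \<in> K" "\<And>y. y \<in> K \<Longrightarrow> F z0 \<le> F y"
      using continuous_attains_inf[OF Kc False continuous_on_subset[OF Fcont]] unfolding K_def by auto
    have z0H: "z0 \<in> H" using z0(1) unfolding K_def by simp
    show ?thesis
    proof (rule that[of "min (\<eta>/2) (F z0)"])
      show "min (\<eta>/2) (F z0) > 0" using A1(2) Fpos[OF z0H] by simp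
      fix z assume z: "z \<in> H"
      show "min (\<eta>/2) (F z0) \<le> F z"
      proof (cases "R \<le> cmod z")
        case True then have "\<eta>/2 \<le> F z" using Flarge z by blast then show ?thesis by linarith
      next
        case False
        then have "z \<in> K" using z unfolding K_def by (simp add: mem_cball_0)
        then have "F z0 \<le> F z" using z0(2) by blast then show ?thesis by linarith
      qed
    qed
  qed
  have "c \<le> (INF z\<in>{z. Re z > - \<nu>}. F z)"
  proof (rule cINF_greatest)
    show "{z. Re z > - \<nu>} \<noteq> {}" using nu0 by (auto intro: exI[of _ 0])
    fix z assume "z \<in> {z. Re z > - \<nu>}"
    then have "z \<in> H" unfolding H_def by simp
    then show "c \<le> F z" by (rule c(2))
  qed
  then show "(INF z\<in>{z. Re z > - \<nu>}. \<Sum>j=1..n+1. cmod (rfun n A \<tau> \<tau>s N B \<theta> \<theta>s M j z)) > 0"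
    using c(1) unfolding F_def by simp
qed

end
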